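(* Let $G$ be an infinite, connected, locally finite graph. If $S$ is a finite set of vertices of $G$ and $U$ is an infinite set of vertices of $G$, then $S$ does not doubly resolve $U$.
   Context: $d$ denotes shortest-path distance in $G$. Two vertices $x,y$ doubly resolve a pair of vertices $u,v$ if $d(u,x)-d(v,x)\neq d(u,y)-d(v,y)$. For sets $S,U$ of vertices, $S$ doubly resolves $U$ if every pair of distinct vertices of $U$ is doubly resolved by some two vertices of $S$. *)

theory Defs
  imports Main
begin

definition simple_graph :: "'a set \<Rightarrow> ('a \<Rightarrow> 'a \<Rightarrow> bool) \<Rightarrow> bool" where
  "simple_graph V E \<longleftrightarrow> (\<forall>x y. E x y \<longrightarrow> x \<in> V \<and> y \<in> V \<and> E y x \<and> x \<noteq> y)"

definition walk :: "('a \<Rightarrow> 'a \<Rightarrow> bool) \<Rightarrow> 'a list \<Rightarrow> bool" where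
  "walk E xs \<longleftrightarrow> xs \<noteq> [] \<and> (\<forall>i. Suc i < length xs \<longrightarrow> E (xs ! i) (xs ! Suc i))"

definition walk_between :: "('a \<Rightarrow> 'a \<Rightarrow> bool) \<Rightarrow> 'a \<Rightarrow> 'a \<Rightarrow> 'a list \<Rightarrow> bool" where
  "walk_between E u v xs \<longleftrightarrow> walk E xs \<and> hd xs = u \<and> last xs = v"

definition connected_graph :: "'a set \<Rightarrow> ('a \<Rightarrow> 'a \<Rightarrow> bool) \<Rightarrow> bool" where
  "connected_graph V E \<longleftrightarrow> (\<forall>u\<in>V. \<forall>v\<in>V. \<exists>xs. walk_between E u v xs)"

definition locally_finite :: "'a set \<Rightarrow> ('a \<Rightarrow> 'a \<Rightarrow> bool) \<Rightarrow> bool" where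
  "locally_finite V E \<longleftrightarrow> (\<forall>v\<in>V. finite {u. E v u})"

definition gdist :: "('a \<Rightarrow> 'a \<Rightarrow> bool) \<Rightarrow> 'a \<Rightarrow> 'a \<Rightarrow> nat" where
  "gdist E u v = (LEAST n. \<exists>xs. walk_between E u v xs \<and> length xs = Suc n)"

definition doubly_resolves_pair ::
  "('a \<Rightarrow> 'a \<Rightarrow> bool) \<Rightarrow> 'a \<Rightarrow> 'a \<Rightarrow> 'a \<Rightarrow> 'a \<Rightarrow> bool" where
  "doubly_resolves_pair E x y u v \<longleftrightarrow>
     int (gdist E u x) - int (gdist E v x) \<noteq> int (gdist E u y) - int (gdist E v y)"

definition doubly_resolves :: "('a \<Rightarrow> 'a \<Rightarrow> bool) \<Rightarrow> 'a set \<Rightarrow> 'a set \<Rightarrow> bool" where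
  "doubly_resolves E S U \<longleftrightarrow>
     (\<forall>u\<in>U. \<forall>v\<in>U. u \<noteq> v \<longrightarrow> (\<exists>x\<in>S. \<exists>y\<in>S. doubly_resolves_pair E x y u v))"

end

theory Submission
  imports Defs "HOL-Library.FuncSet"
begin

lemma walk_append:
  assumes p: "walk_between E a b p" and q: "walk_between E b c q"
  shows "walk_between E a c (p @ tl q)"
proof -
  have pne: "p \<noteq> []" and qne: "q \<noteq> []" using p q unfolding walk_between_def walk_def by auto
  have pe: "\<And>i. Suc i < length p \<Longrightarrow> E (p ! i) (p ! Suc i)" using p unfolding walk_between_def walk_def by auto
  have qe: "\<And>i. Suc i < length q \<Longrightarrow> E (q ! i) (q ! Suc i)" using q unfolding walk_between_def walk_def by auto
  have lp: "last p = b" and hq: "hd q = b" and hp: "hd p = a" and lq: "last q = c"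
    using p q unfolding walk_between_def by auto
  have "\<forall>i. Suc i < length (p @ tl q) \<longrightarrow> E ((p @ tl q) ! i) ((p @ tl q) ! Suc i)"
  proof (intro allI impI)
    fix i assume i: "Suc i < length (p @ tl q)"
    show "E ((p @ tl q) ! i) ((p @ tl q) ! Suc i)"
    proof (cases "Suc i < length p")
      case True then show ?thesis using pe[of i] by (simp add: nth_append)
    next
      case False
      show ?thesis
      proof (cases "i < length p")
        case True
        hence ieq: "i = length p - 1" using False by simp
        have "p ! i = b" using lp pne ieq by (simp add: last_conv_nth)
        moreover have "q ! 0 = b" using hq qne by (simp add: hd_conv_nth)
        moreover have "Suc 0 < length q" using i False by simp
        ultimately show ?thesis using qe[of 0] True False ieq pne
          by (auto simp: nth_append nth_tl)
      next
        case F2: False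
        have "Suc (Suc (i - length p)) < length q" using i F2 by simp
        then show ?thesis using qe[of "Suc (i - length p)"] F2
          by (auto simp: nth_append nth_tl Suc_diff_le)
      qed
    qed
  qed
  moreover have "last (p @ tl q) = c"
  proof (cases "tl q = []")
    case True
    then have "q = [b]" using qne hq by (cases q) auto
    then show ?thesis using True lp lq by simp
  next
    case False
    then show ?thesis using lq qne by (simp add: last_tl)
  qed
  ultimately show ?thesis using pne hp unfolding walk_between_def walk_def by auto
qed

lemma gdist_walk:
  assumes "\<exists>xs. walk_between E a b xs"
  shows "\<exists>xs. walk_between E a b xs \<and> length xs = Suc (gdist E a b)"
proof -
  obtain xs where xs: "walk_between E a b xs" using assms by blast
  then have "xs \<noteq> []" unfolding walk_between_def walk_def by auto
  then have "\<exists>n xs. walk_between E a b xs \<and> length xs = Suc n" using xs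
    by (metis Suc_pred length_greater_0_conv)
  then show ?thesis unfolding gdist_def by (rule LeastI_ex)
qed

lemma gdist_tri:
  assumes "\<exists>xs. walk_between E a b xs" "\<exists>xs. walk_between E b c xs"
  shows "gdist E a c \<le> gdist E a b + gdist E b c"
proof -
  obtain p where p: "walk_between E a b p" "length p = Suc (gdist E a b)"
    using gdist_walk[OF assms(1)] by blast
  obtain q where q: "walk_between E b c q" "length q = Suc (gdist E b c)"
    using gdist_walk[OF assms(2)] by blast
  have w: "walk_between E a c (p @ tl q)" using walk_append[OF p(1) q(1)] .
  have "length (p @ tl q) = Suc (gdist E a b + gdist E b c)" using p q by simp
  then show ?thesis unfolding gdist_def using w by (intro Least_le) blast
qed

theorem lemma5:
  fixes V :: "'a set" and E :: "'a \<Rightarrow> 'a \<Rightarrow> bool" and S U :: "'a set"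
  assumes "simple_graph V E"
    and "infinite V"
    and "connected_graph V E"
    and "locally_finite V E"
    and "S \<subseteq> V" and "finite S"
    and "U \<subseteq> V" and "infinite U"
  shows "\<not> doubly_resolves E S U"
proof (cases "S = {}")
  case True
  obtain u v where "u \<in> U" "v \<in> U" "u \<noteq> v"
    using assms(8) by (metis finite.simps infinite_imp_nonempty insertI1 infinite_remove
        ex_in_conv Diff_iff singletonI)
  then show ?thesis using True unfolding doubly_resolves_def by blast
next
  case False
  then obtain s0 where s0: "s0 \<in> S" by blast
  have wk: "\<And>a b. a \<in> V \<Longrightarrow> b \<in> V \<Longrightarrow> \<exists>xs. walk_between E a b xs"
    using assms(3) unfolding connected_graph_def by blast
  define B where "B = (\<Sum>x\<in>S. int (gdist E s0 x) + int (gdist E x s0))"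
  define f where "f u = (\<lambda>x\<in>S. int (gdist E u x) - int (gdist E u s0))" for u
  have bnd: "f u \<in> PiE S (\<lambda>_. {-B..B})" if u: "u \<in> U" for u
  proof -
    have uV: "u \<in> V" using u assms(7) by blast
    have s0V: "s0 \<in> V" using s0 assms(5) by blast
    { fix x assume x: "x \<in> S"
      have xV: "x \<in> V" using x assms(5) by blast
      have t1: "gdist E u x \<le> gdist E u s0 + gdist E s0 x" by (rule gdist_tri[OF wk[OF uV s0V] wk[OF s0V xV]])
      have t2: "gdist E u s0 \<le> gdist E u x + gdist E x s0" by (rule gdist_tri[OF wk[OF uV xV] wk[OF xV s0V]])
      have "int (gdist E s0 x) + int (gdist E x s0) \<le> B"
        unfolding B_def using x assms(6) by (intro member_le_sum) auto
      then have "f u x \<in> {-B..B}" using t1 t2 x unfolding f_def by auto }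
    then show ?thesis unfolding f_def by auto
  qed
  have fin: "finite (PiE S (\<lambda>_. {-B..B}))" using assms(6) by (intro finite_PiE) auto
  have "finite (f ` U)" using bnd fin by (meson finite_subset image_subsetI)
  then have "\<not> inj_on f U" using assms(8) finite_imageD by blast
  then obtain u v where uv: "u \<in> U" "v \<in> U" "u \<noteq> v" "f u = f v"
    unfolding inj_on_def by blast
  have "\<not> doubly_resolves_pair E x y u v" if "x \<in> S" "y \<in> S" for x y
  proof -
    have "f u x = f v x" "f u y = f v y" using uv by auto
    then show ?thesis using that unfolding f_def doubly_resolves_pair_def by auto
  qed
  then show ?thesis using uv unfolding doubly_resolves_def by blast
qed

end
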